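(* Let $r\ge 2$ and $m = 2$. Let $a_{ij}\in\mathbb{C}$ ($1\le i\le 2$, $1\le j\le r$) and $f_i=\sum_{j=1}^r a_{ij}z_j$. Let $S_1$ be the family $(z_1^2,\dots,z_r^2,f_1^2,f_2^2)$ in $\mathbb{C}[z_1,\dots,z_r]$ and $S_2$ the family of all products of two distinct members of $S_1$. Then $S_2$ is linearly independent if and only if $S_1$ is linearly independent.
   Context: For a finite family $S_1=(p_1,\dots,p_l)$ of polynomials and $1\le k\le l$, $S_k$ denotes the family $(p_{i_1}p_{i_2}\cdots p_{i_k})_{1\le i_1<\dots<i_k\le l}$ of the $\binom{l}{k}$ products of $k$ members of $S_1$ with distinct indices. A family is linearly independent (over $\mathbb{C}$) if no nontrivial $\mathbb{C}$-linear combination of its members (counted with their indices, so repeated members make the family dependent) vanishes. *)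

theory Defs
  imports Complex_Main "HOL-Library.Poly_Mapping"
begin

text \<open>Multivariate polynomials over the complex numbers in variables z_0, z_1, ...:
  a polynomial is a finitely supported map from monomials (exponent vectors
  nat =>0 nat) to coefficients; multiplication is convolution.\<close>

type_synonym cpoly = "(nat \<Rightarrow>\<^sub>0 nat) \<Rightarrow>\<^sub>0 complex"

definition pvar :: "nat \<Rightarrow> cpoly" where
  "pvar j = Poly_Mapping.single (Poly_Mapping.single j 1) 1"

definition pconst :: "complex \<Rightarrow> cpoly" where
  "pconst c = Poly_Mapping.single 0 c"

definition lin_indep_family :: "'i set \<Rightarrow> ('i \<Rightarrow> cpoly) \<Rightarrow> bool" where
  "lin_indep_family I P \<longleftrightarrow>
     (\<forall>c :: 'i \<Rightarrow> complex. (\<Sum>i\<in>I. pconst (c i) * P i) = 0 \<longrightarrow> (\<forall>i\<in>I. c i = 0))"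

text \<open>Linear form f_i = sum_j a i j z_j (variables indexed 0..r-1, i in {0,1}).\<close>
definition linform :: "nat \<Rightarrow> (nat \<Rightarrow> nat \<Rightarrow> complex) \<Rightarrow> nat \<Rightarrow> cpoly" where
  "linform r a i = (\<Sum>j<r. pconst (a i j) * pvar j)"

text \<open>The family S_1 = (z_0^2,...,z_{r-1}^2, f_0^2, f_1^2), indexed by {0..<r+2}.\<close>
definition S1fam :: "nat \<Rightarrow> (nat \<Rightarrow> nat \<Rightarrow> complex) \<Rightarrow> nat \<Rightarrow> cpoly" where
  "S1fam r a k = (if k < r then pvar k ^ 2 else linform r a (k - r) ^ 2)"

text \<open>The family S_2 of products of two members of S_1 with distinct indices,
  indexed by pairs (i,k) with i < k < r+2.\<close>
definition S2idx :: "nat \<Rightarrow> (nat \<times> nat) set" where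
  "S2idx r = {(i, k). i < k \<and> k < r + 2}"

definition S2fam :: "nat \<Rightarrow> (nat \<Rightarrow> nat \<Rightarrow> complex) \<Rightarrow> nat \<times> nat \<Rightarrow> cpoly" where
  "S2fam r a ik = S1fam r a (fst ik) * S1fam r a (snd ik)"

end

theory Submission
  imports Defs
begin

definition mv :: "(nat \<Rightarrow> complex) \<Rightarrow> (nat \<Rightarrow>\<^sub>0 nat) \<Rightarrow> complex" where
  "mv x m = (\<Prod>j\<in>Poly_Mapping.keys m. x j ^ Poly_Mapping.lookup m j)"

definition ev :: "(nat \<Rightarrow> complex) \<Rightarrow> cpoly \<Rightarrow> complex" where
  "ev x p = (\<Sum>m\<in>Poly_Mapping.keys p. Poly_Mapping.lookup p m * mv x m)"

lemma mv_superset: "finite S \<Longrightarrow> Poly_Mapping.keys m \<subseteq> S \<Longrightarrow> mv x m = (\<Prod>j\<in>S. x j ^ Poly_Mapping.lookup m j)"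
  unfolding mv_def
  by (rule prod.mono_neutral_left) (auto simp: in_keys_iff)

lemma mv_add: "mv x (m1 + m2) = mv x m1 * mv x m2"
proof -
  let ?S = "Poly_Mapping.keys m1 \<union> Poly_Mapping.keys m2"
  have "mv x (m1 + m2) = (\<Prod>j\<in>?S. x j ^ Poly_Mapping.lookup (m1+m2) j)"
    by (rule mv_superset) (auto simp: keys_add)
  also have "\<dots> = (\<Prod>j\<in>?S. x j ^ Poly_Mapping.lookup m1 j) * (\<Prod>j\<in>?S. x j ^ Poly_Mapping.lookup m2 j)"
    by (simp add: lookup_add power_add prod.distrib)
  also have "\<dots> = mv x m1 * mv x m2"
    using mv_superset[of ?S m1 x] mv_superset[of ?S m2 x] by auto
  finally show ?thesis .
qed

lemma mv_zero [simp]: "mv x 0 = 1" by (simp add: mv_def)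
lemma mv_single1 [simp]: "mv x (Poly_Mapping.single j 1) = x j" by (simp add: mv_def lookup_single)

lemma ev_superset: "finite S \<Longrightarrow> Poly_Mapping.keys p \<subseteq> S \<Longrightarrow> ev x p = (\<Sum>m\<in>S. Poly_Mapping.lookup p m * mv x m)"
  unfolding ev_def
  by (rule sum.mono_neutral_left) (auto simp: in_keys_iff)

lemma ev_add: "ev x (p + q) = ev x p + ev x q"
proof -
  let ?S = "Poly_Mapping.keys p \<union> Poly_Mapping.keys q"
  have "ev x (p + q) = (\<Sum>m\<in>?S. Poly_Mapping.lookup (p+q) m * mv x m)"
    by (rule ev_superset) (auto simp: keys_add)
  also have "\<dots> = (\<Sum>m\<in>?S. Poly_Mapping.lookup p m * mv x m) + (\<Sum>m\<in>?S. Poly_Mapping.lookup q m * mv x m)"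
    by (simp add: lookup_add distrib_right sum.distrib)
  also have "\<dots> = ev x p + ev x q"
    using ev_superset[of ?S p x] ev_superset[of ?S q x] by auto
  finally show ?thesis .
qed

lemma ev_zero [simp]: "ev x 0 = 0" by (simp add: ev_def)

lemma ev_single [simp]: "ev x (Poly_Mapping.single m c) = c * mv x m"
  by (simp add: ev_def)

lemma update_as_add: "a \<notin> Poly_Mapping.keys f \<Longrightarrow> Poly_Mapping.update a b f = f + Poly_Mapping.single a b"
  by (rule poly_mapping_eqI) (auto simp: lookup_update lookup_add lookup_single in_keys_iff)

lemma ev_single_mult: "ev x (Poly_Mapping.single a b * q) = b * mv x a * ev x q"
proof (induction q rule: Poly_Mapping.update_induct)
  case const then show ?case by simp
next
  case (update f c d)
  then show ?case
    by (simp add: update_as_add distrib_left ev_add mult_single mv_add algebra_simps)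
qed

lemma ev_mult: "ev x (p * q) = ev x p * ev x q"
proof (induction p rule: Poly_Mapping.update_induct)
  case const then show ?case by simp
next
  case (update f c d)
  have "Poly_Mapping.update c d f * q = f * q + Poly_Mapping.single c d * q"
    using update(1) by (simp add: update_as_add distrib_right)
  then have "ev x (Poly_Mapping.update c d f * q) = ev x f * ev x q + d * mv x c * ev x q"
    using update(3) by (simp only: ev_add ev_single_mult)
  moreover have "ev x (Poly_Mapping.update c d f) = ev x f + d * mv x c"
    using update(1) by (simp add: update_as_add ev_add)
  ultimately show ?case by (simp add: algebra_simps)
qed

lemma ev_sum: "ev x (\<Sum>i\<in>I. f i) = (\<Sum>i\<in>I. ev x (f i))"
  by (induction I rule: infinite_finite_induct) (auto simp: ev_add)

lemma ev_pvar [simp]: "ev x (pvar j) = x j" by (simp add: pvar_def mv_def lookup_single)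
lemma ev_pconst [simp]: "ev x (pconst c) = c" by (simp add: pconst_def)
lemma ev_power2: "ev x (p ^ 2) = ev x p ^ 2" by (simp add: power2_eq_square ev_mult)

definition pt2 :: "nat \<Rightarrow> nat \<Rightarrow> complex \<Rightarrow> complex \<Rightarrow> nat \<Rightarrow> complex" where
  "pt2 i l p t = (\<lambda>n. if n = i then p else if n = l then t else 0)"

lemma sum_supp:
  fixes r :: nat
  assumes "D \<subseteq> {..<r}" "\<And>n. n \<notin> D \<Longrightarrow> g n = 0"
  shows "(\<Sum>n<r. g n) = (\<Sum>n\<in>D. g n)"
proof (rule sum.mono_neutral_right)
  show "finite {..<r}" by simp
  show "D \<subseteq> {..<r}" by fact
  show "\<forall>i\<in>{..<r} - D. g i = 0" using assms(2) by blast
qed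


lemma sum_pt2:
  assumes "i < r" "l < r" "i \<noteq> l" "\<And>n. h n 0 = 0"
  shows "(\<Sum>n<r. h n (pt2 i l p t n)) = h i p + h l t"
proof -
  have "(\<Sum>n<r. h n (pt2 i l p t n)) = (\<Sum>n\<in>{i,l}. h n (pt2 i l p t n))"
    using assms by (intro sum_supp) (auto simp: pt2_def)
  also have "\<dots> = h i p + h l t" using assms by (simp add: pt2_def)
  finally show ?thesis .
qed

lemma lin_pt2: "i < r \<Longrightarrow> l < r \<Longrightarrow> i \<noteq> l \<Longrightarrow> (\<Sum>j<r. w j * pt2 i l p t j) = w i * p + w l * t"
  using sum_pt2[of i r l "\<lambda>n v. w n * v"] by simp
lemma sq_pt2: "i < r \<Longrightarrow> l < r \<Longrightarrow> i \<noteq> l \<Longrightarrow> (\<Sum>j<r. w j * (pt2 i l p t j)^2) = w i * p^2 + w l * t^2"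
  using sum_pt2[of i r l "\<lambda>n v. w n * v^2"] by simp

lemma diff_of_two: "q + p1 = (0::'a::ab_group_add) \<Longrightarrow> q + p2 = 0 \<Longrightarrow> p1 - p2 = 0"
proof -
  assume "q + p1 = 0" "q + p2 = 0"
  moreover have "p1 - p2 = (q + p1) - (q + p2)" by simp
  ultimately show ?thesis by simp
qed

lemma stepO:
  fixes A B al be :: "nat \<Rightarrow> complex" and Q :: "(nat \<Rightarrow> complex) \<Rightarrow> complex" and g :: complex
  assumes rel: "\<And>x. Q x + (\<Sum>j<r. A j * x j)^2 * (\<Sum>j<r. al j * (x j)^2)
      + (\<Sum>j<r. B j * x j)^2 * (\<Sum>j<r. be j * (x j)^2)
      + g * (\<Sum>j<r. A j * x j)^2 * (\<Sum>j<r. B j * x j)^2 = 0"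
    and Qeven: "\<And>x y. (\<And>j. (y j)^2 = (x j)^2) \<Longrightarrow> Q y = Q x"
    and il: "i < r" "l < r" "i \<noteq> l"
  shows "al i * A i * A l + be i * B i * B l + g * (A i * A l * (B i)^2 + (A i)^2 * B i * B l) = 0"
proof -
  define X where "X = al i * A i * A l + be i * B i * B l + g * (A i * A l * (B i)^2 + (A i)^2 * B i * B l)"
  define Y where "Y = al l * A i * A l + be l * B i * B l + g * (A i * A l * (B l)^2 + (A l)^2 * B i * B l)"
  have K: "X + t^2 * Y = 0" if "t \<noteq> 0" for t
  proof -
    have q: "Q (pt2 i l 1 (-t)) = Q (pt2 i l 1 t)" by (rule Qeven) (simp add: pt2_def)
    have r1: "Q (pt2 i l 1 t) + ((A i + A l * t)^2 * (al i + al l * t^2) + (B i + B l * t)^2 * (be i + be l * t^2)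
       + g * (A i + A l * t)^2 * (B i + B l * t)^2) = 0"
      using rel[of "pt2 i l 1 t"] il by (simp add: lin_pt2 sq_pt2 add.assoc)
    have r2: "Q (pt2 i l 1 t) + ((A i - A l * t)^2 * (al i + al l * t^2) + (B i - B l * t)^2 * (be i + be l * t^2)
       + g * (A i - A l * t)^2 * (B i - B l * t)^2) = 0"
      using rel[of "pt2 i l 1 (-t)"] il q by (simp add: lin_pt2 sq_pt2 add.assoc)
    have "((A i + A l * t)^2 * (al i + al l * t^2) + (B i + B l * t)^2 * (be i + be l * t^2)
       + g * (A i + A l * t)^2 * (B i + B l * t)^2) - ((A i - A l * t)^2 * (al i + al l * t^2) + (B i - B l * t)^2 * (be i + be l * t^2)
       + g * (A i - A l * t)^2 * (B i - B l * t)^2) = 0"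
      by (rule diff_of_two[OF r1 r2])
    moreover have "((A i + A l * t)^2 * (al i + al l * t^2) + (B i + B l * t)^2 * (be i + be l * t^2)
       + g * (A i + A l * t)^2 * (B i + B l * t)^2) - ((A i - A l * t)^2 * (al i + al l * t^2) + (B i - B l * t)^2 * (be i + be l * t^2)
       + g * (A i - A l * t)^2 * (B i - B l * t)^2) = 4 * t * (X + t^2 * Y)"
      unfolding X_def Y_def by (simp add: algebra_simps power2_eq_square)
    ultimately show ?thesis using that by simp
  qed
  from K[of 1] K[of 2] have h: "X + Y = 0" "X + 4 * Y = 0" by simp_all
  from h(1) have "Y = - X" by (metis neg_eq_iff_add_eq_0)
  with h(2) have "X = 0" by simp
  then show ?thesis unfolding X_def .
qed

definition pt3 :: "nat \<Rightarrow> nat \<Rightarrow> nat \<Rightarrow> complex \<Rightarrow> complex \<Rightarrow> complex \<Rightarrow> nat \<Rightarrow> complex" where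
  "pt3 i j k p s t = (\<lambda>n. if n = i then p else if n = j then s else if n = k then t else 0)"
definition pt4 :: "nat \<Rightarrow> nat \<Rightarrow> nat \<Rightarrow> nat \<Rightarrow> complex \<Rightarrow> complex \<Rightarrow> complex \<Rightarrow> complex \<Rightarrow> nat \<Rightarrow> complex" where
  "pt4 i j k l p s t u = (\<lambda>n. if n = i then p else if n = j then s else if n = k then t else if n = l then u else 0)"

lemma sum_pt3:
  assumes "i < r" "j < r" "k < r" "distinct [i,j,k]" "\<And>n. h n 0 = 0"
  shows "(\<Sum>n<r. h n (pt3 i j k p s t n)) = h i p + h j s + h k t"
proof -
  have "(\<Sum>n<r. h n (pt3 i j k p s t n)) = (\<Sum>n\<in>{i,j,k}. h n (pt3 i j k p s t n))"
    using assms by (intro sum_supp) (auto simp: pt3_def)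
  also have "\<dots> = h i p + h j s + h k t" using assms by (simp add: pt3_def add.assoc)
  finally show ?thesis .
qed
lemma lin_pt3: "i < r \<Longrightarrow> j < r \<Longrightarrow> k < r \<Longrightarrow> distinct [i,j,k] \<Longrightarrow> (\<Sum>n<r. w n * pt3 i j k p s t n) = w i * p + w j * s + w k * t"
  using sum_pt3[of i r j k "\<lambda>n v. w n * v"] by simp
lemma sq_pt3: "i < r \<Longrightarrow> j < r \<Longrightarrow> k < r \<Longrightarrow> distinct [i,j,k] \<Longrightarrow> (\<Sum>n<r. w n * (pt3 i j k p s t n)^2) = w i * p^2 + w j * s^2 + w k * t^2"
  using sum_pt3[of i r j k "\<lambda>n v. w n * v^2"] by simp

lemma sum_pt4:
  assumes "i < r" "j < r" "k < r" "l < r" "distinct [i,j,k,l]" "\<And>n. h n 0 = 0"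
  shows "(\<Sum>n<r. h n (pt4 i j k l p s t u n)) = h i p + h j s + h k t + h l u"
proof -
  have "(\<Sum>n<r. h n (pt4 i j k l p s t u n)) = (\<Sum>n\<in>{i,j,k,l}. h n (pt4 i j k l p s t u n))"
    using assms by (intro sum_supp) (auto simp: pt4_def)
  also have "\<dots> = h i p + h j s + h k t + h l u" using assms by (simp add: pt4_def add.assoc)
  finally show ?thesis .
qed
lemma lin_pt4: "i < r \<Longrightarrow> j < r \<Longrightarrow> k < r \<Longrightarrow> l < r \<Longrightarrow> distinct [i,j,k,l] \<Longrightarrow> (\<Sum>n<r. w n * pt4 i j k l p s t u n) = w i * p + w j * s + w k * t + w l * u"
  using sum_pt4[of i r j k l "\<lambda>n v. w n * v"] by simp
lemma sq_pt4: "i < r \<Longrightarrow> j < r \<Longrightarrow> k < r \<Longrightarrow> l < r \<Longrightarrow> distinct [i,j,k,l] \<Longrightarrow> (\<Sum>n<r. w n * (pt4 i j k l p s t u n)^2) = w i * p^2 + w j * s^2 + w k * t^2 + w l * u^2"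
  using sum_pt4[of i r j k l "\<lambda>n v. w n * v^2"] by simp

lemma stepD:
  fixes A B al be :: "nat \<Rightarrow> complex" and Q :: "(nat \<Rightarrow> complex) \<Rightarrow> complex" and g :: complex
  assumes rel: "\<And>x. Q x + (\<Sum>j<r. A j * x j)^2 * (\<Sum>j<r. al j * (x j)^2)
      + (\<Sum>j<r. B j * x j)^2 * (\<Sum>j<r. be j * (x j)^2)
      + g * (\<Sum>j<r. A j * x j)^2 * (\<Sum>j<r. B j * x j)^2 = 0"
    and Q0: "\<And>x z. (\<And>j. j \<noteq> z \<Longrightarrow> x j = 0) \<Longrightarrow> Q x = 0"
    and il: "i < r" "l < r" "i \<noteq> l"
  shows "al i * (A i)^2 + be i * (B i)^2 + g * (A i)^2 * (B i)^2 = 0"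
proof -
  have "Q (pt2 i l 1 0) = 0" by (rule Q0[where z=i]) (simp add: pt2_def)
  with rel[of "pt2 i l 1 0"] il show ?thesis by (simp add: lin_pt2 sq_pt2 algebra_simps)
qed

lemma stepSF:
  fixes A B al be :: "nat \<Rightarrow> complex" and Q :: "(nat \<Rightarrow> complex) \<Rightarrow> complex" and g :: complex
  assumes rel: "\<And>x. Q x + (\<Sum>j<r. A j * x j)^2 * (\<Sum>j<r. al j * (x j)^2)
      + (\<Sum>j<r. B j * x j)^2 * (\<Sum>j<r. be j * (x j)^2)
      + g * (\<Sum>j<r. A j * x j)^2 * (\<Sum>j<r. B j * x j)^2 = 0"
    and Qeven: "\<And>x y. (\<And>j. (y j)^2 = (x j)^2) \<Longrightarrow> Q y = Q x"
    and idx: "i < r" "j < r" "k < r" "l < r" "distinct [i,j,k,l]"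
    and z: "A k = 0" "A l = 0" "B i = 0" "B j = 0"
  shows "g * A i * A j * B k * B l = 0"
proof -
  define U where "U = al i + al j + al k + al l"
  define V where "V = be i + be j + be k + be l"
  define q where "q = Q (pt4 i j k l 1 1 1 1)"
  define W where "W s t u = (A i + A j * s)^2 * U + (B k * t + B l * u)^2 * V
     + g * (A i + A j * s)^2 * (B k * t + B l * u)^2" for s t u :: complex
  have key: "W s t u = - q" if "s^2 = 1" "t^2 = 1" "u^2 = 1" for s t u
  proof -
    have "Q (pt4 i j k l 1 s t u) = q" unfolding q_def
      by (rule Qeven) (simp add: pt4_def that)
    moreover have "Q (pt4 i j k l 1 s t u) + W s t u = 0"
      using rel[of "pt4 i j k l 1 s t u"] idx z that
      by (simp add: lin_pt4 sq_pt4 W_def U_def V_def add.assoc)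
    ultimately show ?thesis by (metis add.commute eq_neg_iff_add_eq_0)
  qed
  have "32 * (g * A i * A j * B k * B l) =
      W 1 1 1 - W 1 1 (-1) - W 1 (-1) 1 + W 1 (-1) (-1)
    - W (-1) 1 1 + W (-1) 1 (-1) + W (-1) (-1) 1 - W (-1) (-1) (-1)"
    unfolding W_def by (simp add: algebra_simps power2_eq_square)
  also have "\<dots> = 0" by (simp add: key)
  finally have "32 * (g * A i * A j * B k * B l) = 0" .
  then show ?thesis by simp
qed

lemma stepN:
  fixes A B al be :: "nat \<Rightarrow> complex" and Q :: "(nat \<Rightarrow> complex) \<Rightarrow> complex"
  assumes rel: "\<And>x. Q x + (\<Sum>j<r. A j * x j)^2 * (\<Sum>j<r. al j * (x j)^2)
      + (\<Sum>j<r. B j * x j)^2 * (\<Sum>j<r. be j * (x j)^2) = 0"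
    and Qeven: "\<And>x y. (\<And>j. (y j)^2 = (x j)^2) \<Longrightarrow> Q y = Q x"
    and idx: "m < r" "k < r" "l < r" "distinct [m,k,l]"
  shows "al m * A k * A l + be m * B k * B l = 0"
proof -
  define W where "W c s t = (A m + A k * s + A l * t)^2 * (al m + (al k + al l) * c)
     + (B m + B k * s + B l * t)^2 * (be m + (be k + be l) * c)" for c s t :: complex
  have key: "W (c^2) (e1 * c) (e2 * c) = - Q (pt3 m k l 1 c c)" if "e1^2 = 1" "e2^2 = 1" for c e1 e2
  proof -
    have "Q (pt3 m k l 1 (e1 * c) (e2 * c)) = Q (pt3 m k l 1 c c)"
      by (rule Qeven) (simp add: pt3_def that power_mult_distrib)
    moreover have "Q (pt3 m k l 1 (e1 * c) (e2 * c)) + W (c^2) (e1 * c) (e2 * c) = 0"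
      using rel[of "pt3 m k l 1 (e1 * c) (e2 * c)"] idx that
      by (simp add: lin_pt3 sq_pt3 W_def add.assoc power_mult_distrib algebra_simps)
    ultimately show ?thesis by (metis add.commute eq_neg_iff_add_eq_0)
  qed
  have E: "8 * c^2 * (A k * A l * (al m + (al k + al l) * c^2) + B k * B l * (be m + (be k + be l) * c^2)) = 0" for c
  proof -
    have "8 * c^2 * (A k * A l * (al m + (al k + al l) * c^2) + B k * B l * (be m + (be k + be l) * c^2)) =
      W (c^2) c c - W (c^2) (-c) c - W (c^2) c (-c) + W (c^2) (-c) (-c)"
      unfolding W_def by (simp add: algebra_simps power2_eq_square)
    also have "\<dots> = 0" using key[of 1 1 c] key[of "-1" 1 c] key[of 1 "-1" c] key[of "-1" "-1" c] by simp
    finally show ?thesis .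
  qed
  define X where "X = al m * A k * A l + be m * B k * B l"
  define Y where "Y = (al k + al l) * A k * A l + (be k + be l) * B k * B l"
  from E[of 1] have "8 * (X + Y) = 0" unfolding X_def Y_def by (simp add: algebra_simps)
  then have h1: "X + Y = 0" by (subst (asm) mult_eq_0_iff) simp
  from E[of 2] have "32 * (X + 4 * Y) = 0" unfolding X_def Y_def by (simp add: algebra_simps)
  then have h2: "X + 4 * Y = 0" by (subst (asm) mult_eq_0_iff) simp
  from h1 have "Y = - X" by (metis neg_eq_iff_add_eq_0)
  with h2 have "X = 0" by simp
  then show ?thesis unfolding X_def .
qed

lemma H_contra:
  fixes A B :: "nat \<Rightarrow> complex"
  assumes H: "\<And>p q. (\<And>k l. k < l \<Longrightarrow> l < r \<Longrightarrow> p * (A k * A l) + q * (B k * B l) = 0) \<Longrightarrow> p = 0 \<and> q = 0"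
  shows "\<not> (\<forall>k l. k < l \<longrightarrow> l < r \<longrightarrow> A k * A l = 0)" "\<not> (\<forall>k l. k < l \<longrightarrow> l < r \<longrightarrow> B k * B l = 0)"
proof -
  show "\<not> (\<forall>k l. k < l \<longrightarrow> l < r \<longrightarrow> A k * A l = 0)"
  proof
    assume "\<forall>k l. k < l \<longrightarrow> l < r \<longrightarrow> A k * A l = 0"
    then have "(1::complex) = 0 \<and> (0::complex) = 0" by (intro H) auto
    then show False by simp
  qed
  show "\<not> (\<forall>k l. k < l \<longrightarrow> l < r \<longrightarrow> B k * B l = 0)"
  proof
    assume "\<forall>k l. k < l \<longrightarrow> l < r \<longrightarrow> B k * B l = 0"
    then have "(0::complex) = 0 \<and> (1::complex) = 0" by (intro H) auto
    then show False by simp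
  qed
qed

lemma gamma_zero:
  fixes A B al be :: "nat \<Rightarrow> complex" and g :: complex
  assumes D: "\<And>i. i < r \<Longrightarrow> al i * (A i)^2 + be i * (B i)^2 + g * (A i)^2 * (B i)^2 = 0"
    and O: "\<And>i l. i < r \<Longrightarrow> l < r \<Longrightarrow> i \<noteq> l \<Longrightarrow>
        al i * A i * A l + be i * B i * B l + g * (A i * A l * (B i)^2 + (A i)^2 * B i * B l) = 0"
    and SF: "\<And>i j k l. i < r \<Longrightarrow> j < r \<Longrightarrow> k < r \<Longrightarrow> l < r \<Longrightarrow> distinct [i,j,k,l] \<Longrightarrow>
        A k = 0 \<Longrightarrow> A l = 0 \<Longrightarrow> B i = 0 \<Longrightarrow> B j = 0 \<Longrightarrow> g * A i * A j * B k * B l = 0"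
    and H: "\<And>p q. (\<And>k l. k < l \<Longrightarrow> l < r \<Longrightarrow> p * (A k * A l) + q * (B k * B l) = 0) \<Longrightarrow> p = 0 \<and> q = 0"
  shows "g = 0"
proof (rule ccontr)
  assume g: "g \<noteq> 0"
  note HA = H_contra(1)[OF H] and HB = H_contra(2)[OF H]
  define u where "u i = A i * (al i + g * (B i)^2)" for i
  define w where "w i = B i * (be i + g * (A i)^2)" for i
  have UO: "u i * A l + w i * B l = 0" if "i < r" "l < r" "i \<noteq> l" for i l
    using O[OF that] unfolding u_def w_def by (simp add: algebra_simps power2_eq_square)
  have UD: "u i * A i + w i * B i = g * (A i)^2 * (B i)^2" if "i < r" for i
    using D[OF that] unfolding u_def w_def by (simp add: algebra_simps power2_eq_square)
  show False
  proof (cases "\<exists>i<r. A i * B i \<noteq> 0")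
    case True
    then obtain i where i: "i < r" "A i \<noteq> 0" "B i \<noteq> 0" by auto
    have UDi: "u i * A i + w i * B i \<noteq> 0" using UD[OF i(1)] g i by simp
    show False
    proof (cases "w i = 0")
      case True
      then have "u i \<noteq> 0" using UDi by auto
      then have Al: "A l = 0" if "l < r" "l \<noteq> i" for l
        using UO[OF i(1) that(1)] that True by auto
      have "\<forall>k l. k < l \<longrightarrow> l < r \<longrightarrow> A k * A l = 0"
      proof (intro allI impI)
        fix k l assume "k < (l::nat)" "l < r"
        then show "A k * A l = 0" using Al[of k] Al[of l] by (cases "k = i") auto
      qed
      with HA show False by blast
    next
      case False
      define t where "t = - u i / w i"
      have Bl: "B l = t * A l" if "l < r" "l \<noteq> i" for l
      proof -
        have "u i * A l + w i * B l = 0" using UO[OF i(1) that(1)] that by auto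
        then show ?thesis using False unfolding t_def by (simp add: field_simps) (metis add.commute add_eq_0_iff2 mult.commute)
      qed
      show False
      proof (cases "t = 0")
        case True
        have "\<forall>k l. k < l \<longrightarrow> l < r \<longrightarrow> B k * B l = 0"
        proof (intro allI impI)
          fix k l assume "k < (l::nat)" "l < r"
          then show "B k * B l = 0" using Bl[of k] Bl[of l] True by (cases "k = i") auto
        qed
        with HB show False by blast
      next
        case tnz: False
        show False
        proof (cases "\<exists>j<r. j \<noteq> i \<and> A j \<noteq> 0")
          case False
          then have Al: "A l = 0" if "l < r" "l \<noteq> i" for l using that by auto
          have "\<forall>k l. k < l \<longrightarrow> l < r \<longrightarrow> A k * A l = 0"
          proof (intro allI impI)
            fix k l assume "k < (l::nat)" "l < r"
            then show "A k * A l = 0" using Al[of k] Al[of l] by (cases "k = i") auto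
          qed
          with HA show False by blast
        next
          case True
          then obtain j where j: "j < r" "j \<noteq> i" "A j \<noteq> 0" by auto
          have Bj: "B j \<noteq> 0" using Bl[OF j(1,2)] tnz j(3) by simp
          have c: "(u j + t * w j) * A j \<noteq> 0"
            using UD[OF j(1)] Bl[OF j(1,2)] g j(3) Bj by (simp add: algebra_simps)
          have Az: "A l = 0" if "l < r" "l \<noteq> i" "l \<noteq> j" for l
          proof -
            have "u j * A l + w j * B l = 0" using UO[OF j(1) that(1)] that by auto
            then have "(u j + t * w j) * A l = 0" using Bl[OF that(1,2)] by (simp add: algebra_simps)
            then show ?thesis using c by auto
          qed
          have Bz: "B l = 0" if "l < r" "l \<noteq> i" "l \<noteq> j" for l
            using Bl[OF that(1,2)] Az[OF that] by simp
          have "B i * B j = 0 \<and> - (A i * A j) = 0"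
          proof (rule H)
            fix k l assume kl: "k < (l::nat)" "l < r"
            show "B i * B j * (A k * A l) + - (A i * A j) * (B k * B l) = 0"
            proof (cases "(k = i \<and> l = j) \<or> (k = j \<and> l = i)")
              case True then show ?thesis by (auto simp: algebra_simps)
            next
              case False
              then have "(k \<noteq> i \<and> k \<noteq> j) \<or> (l \<noteq> i \<and> l \<noteq> j)" using kl by auto
              then show ?thesis using Az Bz kl by auto
            qed
          qed
          then show False using i j Bj by simp
        qed
      qed
    qed
  next
    case False
    then have AB: "A i * B i = 0" if "i < r" for i using that by auto
    from HA obtain i j where ij: "i < j" "j < r" "A i * A j \<noteq> 0" by blast
    from HB obtain k l where kl: "k < l" "l < r" "B k * B l \<noteq> 0" by blast
    have z: "B i = 0" "B j = 0" "A k = 0" "A l = 0"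
      using AB[of i] AB[of j] AB[of k] AB[of l] ij kl by auto
    have "distinct [i,j,k,l]" using ij kl z by auto
    then have "g * A i * A j * B k * B l = 0" using SF[of i j k l] ij kl z by auto
    then show False using g ij kl by simp
  qed
qed

lemma ab_zero:
  fixes A B al be :: "nat \<Rightarrow> complex"
  assumes O: "\<And>i l. i < r \<Longrightarrow> l < r \<Longrightarrow> i \<noteq> l \<Longrightarrow> al i * A i * A l + be i * B i * B l = 0"
    and N: "\<And>m k l. m < r \<Longrightarrow> k < r \<Longrightarrow> l < r \<Longrightarrow> distinct [m,k,l] \<Longrightarrow> al m * A k * A l + be m * B k * B l = 0"
    and H: "\<And>p q. (\<And>k l. k < l \<Longrightarrow> l < r \<Longrightarrow> p * (A k * A l) + q * (B k * B l) = 0) \<Longrightarrow> p = 0 \<and> q = 0"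
    and m: "m < r"
  shows "al m = 0 \<and> be m = 0"
proof (rule H)
  fix k l assume kl: "k < (l::nat)" "l < r"
  show "al m * (A k * A l) + be m * (B k * B l) = 0"
  proof (cases "m = k")
    case True then show ?thesis using O[of m l] kl m by (simp add: algebra_simps)
  next
    case False
    show ?thesis
    proof (cases "m = l")
      case True then show ?thesis using O[of m k] kl m by (simp add: algebra_simps)
    next
      case False
      then show ?thesis using N[of m k l] kl m \<open>m \<noteq> k\<close> by (simp add: algebra_simps)
    qed
  qed
qed

definition Fv :: "nat \<Rightarrow> (nat \<Rightarrow> nat \<Rightarrow> complex) \<Rightarrow> nat \<Rightarrow> (nat \<Rightarrow> complex) \<Rightarrow> complex" where
  "Fv r a i x = (\<Sum>j<r. a i j * x j)"

definition sv :: "nat \<Rightarrow> (nat \<Rightarrow> nat \<Rightarrow> complex) \<Rightarrow> nat \<Rightarrow> (nat \<Rightarrow> complex) \<Rightarrow> complex" where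
  "sv r a k x = (if k < r then (x k)^2 else (Fv r a (k - r) x)^2)"

lemma ev_linform: "ev x (linform r a i) = Fv r a i x"
  by (simp add: linform_def Fv_def ev_sum ev_mult)

lemma ev_S1: "ev x (S1fam r a k) = sv r a k x"
  by (simp add: S1fam_def sv_def ev_power2 ev_linform)

lemma ev_S2rel: "ev x (\<Sum>p\<in>S2idx r. pconst (c p) * S2fam r a p) = (\<Sum>p\<in>S2idx r. c p * sv r a (fst p) x * sv r a (snd p) x)"
  by (simp add: ev_sum ev_mult S2fam_def ev_S1 mult.assoc)

lemma ev_S1rel: "ev x (\<Sum>k\<in>{0..<r+2}. pconst (c k) * S1fam r a k) = (\<Sum>k\<in>{0..<r+2}. c k * sv r a k x)"
  by (simp only: ev_sum ev_mult ev_pconst ev_S1)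

lemma S2idx_eq: "S2idx r = (\<lambda>(k,i). (i,k)) ` (SIGMA k:{..<r+2}. {..<k})"
  unfolding S2idx_def by (auto simp: image_iff)

lemma sum_S2idx: "(\<Sum>p\<in>S2idx r. f p) = (\<Sum>k<r+2. \<Sum>i<k. f (i,k))"
proof -
  have inj: "inj_on (\<lambda>(k,i). (i,k)) (SIGMA k:{..<r+2}. {..<k})" by (auto simp: inj_on_def)
  have "(\<Sum>p\<in>S2idx r. f p) = (\<Sum>q\<in>(SIGMA k:{..<r+2}. {..<k}). f ((\<lambda>(k,i). (i,k)) q))"
    unfolding S2idx_eq using sum.reindex[OF inj, of f] by (simp add: comp_def)
  also have "\<dots> = (\<Sum>(k,i)\<in>(SIGMA k:{..<r+2}. {..<k}). f (i,k))"
    by (simp add: split_def)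
  also have "\<dots> = (\<Sum>k<r+2. \<Sum>i<k. f (i,k))"
    by (rule sum.Sigma[symmetric]) auto
  finally show ?thesis .
qed

definition Qf :: "nat \<Rightarrow> (nat \<times> nat \<Rightarrow> complex) \<Rightarrow> (nat \<Rightarrow> complex) \<Rightarrow> complex" where
  "Qf r c x = (\<Sum>k<r. \<Sum>i<k. c (i,k) * (x i)^2 * (x k)^2)"

lemma Phi_decomp:
  "(\<Sum>p\<in>S2idx r. c p * sv r a (fst p) x * sv r a (snd p) x) =
   Qf r c x + (\<Sum>j<r. a 0 j * x j)^2 * (\<Sum>j<r. c (j,r) * (x j)^2)
   + (\<Sum>j<r. a 1 j * x j)^2 * (\<Sum>j<r. c (j,r+1) * (x j)^2)
   + c (r,r+1) * (\<Sum>j<r. a 0 j * x j)^2 * (\<Sum>j<r. a 1 j * x j)^2"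
proof -
  let ?F = "(\<Sum>j<r. a 0 j * x j)" and ?G = "(\<Sum>j<r. a 1 j * x j)"
  have "(\<Sum>p\<in>S2idx r. c p * sv r a (fst p) x * sv r a (snd p) x)
      = (\<Sum>k<r+2. \<Sum>i<k. c (i,k) * sv r a i x * sv r a k x)"
    by (simp add: sum_S2idx)
  also have "\<dots> = (\<Sum>k<r. \<Sum>i<k. c (i,k) * sv r a i x * sv r a k x)
      + (\<Sum>i<r. c (i,r) * sv r a i x * sv r a r x)
      + (\<Sum>i<r+1. c (i,r+1) * sv r a i x * sv r a (r+1) x)"
    by (simp add: lessThan_Suc add.commute add.left_commute)
  also have "(\<Sum>k<r. \<Sum>i<k. c (i,k) * sv r a i x * sv r a k x) = Qf r c x"
    unfolding Qf_def by (intro sum.cong refl) (auto simp: sv_def)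
  also have "(\<Sum>i<r. c (i,r) * sv r a i x * sv r a r x) = ?F^2 * (\<Sum>j<r. c (j,r) * (x j)^2)"
    by (simp add: sv_def Fv_def sum_distrib_left sum_distrib_right algebra_simps)
  also have "(\<Sum>i<r+1. c (i,r+1) * sv r a i x * sv r a (r+1) x)
      = ?G^2 * (\<Sum>j<r. c (j,r+1) * (x j)^2) + c (r,r+1) * ?F^2 * ?G^2"
    by (simp add: sv_def Fv_def sum_distrib_left sum_distrib_right algebra_simps)
  finally show ?thesis by (simp add: add.assoc)
qed

lemma Qf_even: "(\<And>j. (y j)^2 = (x j)^2) \<Longrightarrow> Qf r c y = Qf r c x"
  unfolding Qf_def by simp

lemma Qf_single: "(\<And>j. j \<noteq> z \<Longrightarrow> x j = 0) \<Longrightarrow> Qf r c x = 0"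
  unfolding Qf_def
proof (intro sum.neutral ballI)
  fix k i assume h: "\<And>j. j \<noteq> z \<Longrightarrow> x j = 0" and k: "k \<in> {..<r}" and i: "i \<in> {..<k}"
  show "c (i,k) * (x i)^2 * (x k)^2 = 0"
    using h[of i] h[of k] i by (cases "i = z") auto
qed

lemma Qf_pt2: assumes "i < k" "k < r" shows "Qf r c (pt2 i k 1 1) = c (i,k)"
proof -
  have inner: "(\<Sum>i'<k'. c (i',k') * (pt2 i k 1 1 i')^2 * (pt2 i k 1 1 k')^2) = (if k' = k then c (i,k) else 0)" for k'
  proof (cases "k' = k")
    case True
    have "(\<Sum>i'<k'. c (i',k') * (pt2 i k 1 1 i')^2 * (pt2 i k 1 1 k')^2) = (\<Sum>i'<k. if i' = i then c (i,k) else 0)"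
      using True assms by (intro sum.cong refl) (auto simp: pt2_def)
    also have "\<dots> = c (i,k)" using assms by simp
    finally show ?thesis using True by simp
  next
    case False
    have "(\<Sum>i'<k'. c (i',k') * (pt2 i k 1 1 i')^2 * (pt2 i k 1 1 k')^2) = 0"
    proof (intro sum.neutral ballI)
      fix i' assume "i' \<in> {..<k'}"
      then show "c (i',k') * (pt2 i k 1 1 i')^2 * (pt2 i k 1 1 k')^2 = 0"
        using False assms by (auto simp: pt2_def)
    qed
    then show ?thesis using False by simp
  qed
  show ?thesis unfolding Qf_def inner using assms by simp
qed

lemma pconst_mult: "pconst (a * b) = pconst a * pconst b"
  by (simp add: pconst_def mult_single)
lemma pconst_add: "pconst (a + b) = pconst a + pconst b"
  by (simp add: pconst_def single_add)
lemma pconst_0 [simp]: "pconst 0 = 0" by (simp add: pconst_def)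
lemma pconst_1 [simp]: "pconst 1 = 1" by (simp add: pconst_def)
lemma pconst_minus: "pconst (- a) = - pconst a" by (simp add: pconst_def single_uminus)

lemma lf_sq: "(linform r a i)^2 = (\<Sum>j<r. \<Sum>k<r. pconst (a i j * a i k) * (pvar j * pvar k))"
  unfolding power2_eq_square linform_def sum_product
  by (intro sum.cong refl) (simp add: pconst_mult algebra_simps)

lemma S1_rel_zero:
  fixes p q :: complex
  assumes h: "\<And>k l. k < l \<Longrightarrow> l < r \<Longrightarrow> p * (a 0 k * a 0 l) + q * (a 1 k * a 1 l) = 0"
  defines "cc \<equiv> (\<lambda>k. if k < r then - (p * (a 0 k)^2 + q * (a 1 k)^2) else if k = r then p else q)"
  shows "(\<Sum>k\<in>{0..<r+2}. pconst (cc k) * S1fam r a k) = 0"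
proof -
  have sp: "(\<Sum>k\<in>{0..<r+2}. pconst (cc k) * S1fam r a k)
     = (\<Sum>k<r. pconst (cc k) * (pvar k)^2) + (pconst p * (linform r a 0)^2 + pconst q * (linform r a 1)^2)"
    by (simp add: atLeast0LessThan lessThan_Suc cc_def S1fam_def add.assoc)
  have "pconst p * (linform r a 0)^2 + pconst q * (linform r a 1)^2
      = (\<Sum>j<r. \<Sum>k<r. pconst (p * (a 0 j * a 0 k) + q * (a 1 j * a 1 k)) * (pvar j * pvar k))"
    unfolding lf_sq sum_distrib_left sum.distrib[symmetric]
    by (intro sum.cong refl) (simp add: pconst_mult pconst_add algebra_simps)
  also have "\<dots> = (\<Sum>j<r. \<Sum>k<r. if k = j then pconst (p * (a 0 j)^2 + q * (a 1 j)^2) * (pvar j)^2 else 0)"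
  proof (intro sum.cong refl)
    fix j k assume jk: "j \<in> {..<r}" "k \<in> {..<r}"
    show "pconst (p * (a 0 j * a 0 k) + q * (a 1 j * a 1 k)) * (pvar j * pvar k) =
      (if k = j then pconst (p * (a 0 j)^2 + q * (a 1 j)^2) * (pvar j)^2 else 0)"
    proof (cases "k = j")
      case True then show ?thesis by (simp add: power2_eq_square)
    next
      case False
      then have "p * (a 0 j * a 0 k) + q * (a 1 j * a 1 k) = 0"
        using h[of j k] h[of k j] jk by (cases "j < k") (auto simp: mult.commute)
      then show ?thesis using False by simp
    qed
  qed
  also have "\<dots> = (\<Sum>j<r. pconst (p * (a 0 j)^2 + q * (a 1 j)^2) * (pvar j)^2)"
    by simp
  finally have "pconst p * (linform r a 0)^2 + pconst q * (linform r a 1)^2 = (\<Sum>j<r. pconst (p * (a 0 j)^2 + q * (a 1 j)^2) * (pvar j)^2)" .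
  moreover have "(\<Sum>k<r. pconst (cc k) * (pvar k)^2) = - (\<Sum>j<r. pconst (p * (a 0 j)^2 + q * (a 1 j)^2) * (pvar j)^2)"
  proof -
    have "(\<Sum>k<r. pconst (cc k) * (pvar k)^2) = (\<Sum>j<r. - (pconst (p * (a 0 j)^2 + q * (a 1 j)^2) * (pvar j)^2))"
    proof (intro sum.cong refl)
      fix k assume "k \<in> {..<r}"
      then have "cc k = - (p * (a 0 k)^2 + q * (a 1 k)^2)" by (simp add: cc_def)
      then show "pconst (cc k) * (pvar k)^2 = - (pconst (p * (a 0 k)^2 + q * (a 1 k)^2) * (pvar k)^2)"
        by (simp only: pconst_minus mult_minus_left)
    qed
    then show ?thesis by (simp add: sum_negf)
  qed
  ultimately show ?thesis using sp by simp
qed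

lemma H_from_indep:
  assumes ind: "lin_indep_family {0..<r+2} (S1fam r a)"
  shows "\<And>p q. (\<And>k l. k < l \<Longrightarrow> l < r \<Longrightarrow> p * (a 0 k * a 0 l) + q * (a 1 k * a 1 l) = 0) \<Longrightarrow> p = 0 \<and> q = 0"
proof -
  fix p q :: complex
  assume h: "\<And>k l. k < l \<Longrightarrow> l < r \<Longrightarrow> p * (a 0 k * a 0 l) + q * (a 1 k * a 1 l) = 0"
  define cc where "cc = (\<lambda>k. if k < r then - (p * (a 0 k)^2 + q * (a 1 k)^2) else if k = r then p else q)"
  have "(\<Sum>k\<in>{0..<r+2}. pconst (cc k) * S1fam r a k) = 0"
    unfolding cc_def by (rule S1_rel_zero[OF h])
  then have "\<forall>k\<in>{0..<r+2}. cc k = 0" using ind unfolding lin_indep_family_def by blast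
  then have "cc r = 0" "cc (r+1) = 0" by auto
  then show "p = 0 \<and> q = 0" by (simp add: cc_def)
qed

lemma dir_back:
  assumes r2: "r \<ge> 2" and ind: "lin_indep_family {0..<r+2} (S1fam r a)"
  shows "lin_indep_family (S2idx r) (S2fam r a)"
  unfolding lin_indep_family_def
proof (intro allI impI)
  fix c :: "nat \<times> nat \<Rightarrow> complex"
  assume hc: "(\<Sum>p\<in>S2idx r. pconst (c p) * S2fam r a p) = 0"
  note H = H_from_indep[OF ind]
  have r3: "r \<ge> 3"
  proof (rule ccontr)
    assume "\<not> r \<ge> 3"
    with r2 have r: "r = 2" by simp
    show False
    proof (cases "a 0 0 * a 0 1 = 0")
      case True
      have "(1::complex) = 0 \<and> (0::complex) = 0"
      proof (rule H)
        fix k l :: nat assume "k < l" "l < r"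
        then have "k = 0" "l = 1" using r by auto
        then show "1 * (a 0 k * a 0 l) + 0 * (a 1 k * a 1 l) = 0" using True by simp
      qed
      then show False by simp
    next
      case False
      have "a 1 0 * a 1 1 = 0 \<and> - (a 0 0 * a 0 1) = 0"
      proof (rule H)
        fix k l :: nat assume "k < l" "l < r"
        then have "k = 0" "l = 1" using r by auto
        then show "a 1 0 * a 1 1 * (a 0 k * a 0 l) + - (a 0 0 * a 0 1) * (a 1 k * a 1 l) = 0" by simp
      qed
      then show False using False by simp
    qed
  qed
  have rel: "Qf r c x + (\<Sum>j<r. a 0 j * x j)^2 * (\<Sum>j<r. c (j,r) * (x j)^2)
   + (\<Sum>j<r. a 1 j * x j)^2 * (\<Sum>j<r. c (j,r+1) * (x j)^2)
   + c (r,r+1) * (\<Sum>j<r. a 0 j * x j)^2 * (\<Sum>j<r. a 1 j * x j)^2 = 0" for x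
    using arg_cong[OF hc, of "ev x"] by (simp add: ev_S2rel Phi_decomp)
  have Qe: "\<And>x y. (\<And>j. (y j)^2 = (x j)^2) \<Longrightarrow> Qf r c y = Qf r c x" by (rule Qf_even)
  have Qs: "\<And>x z. (\<And>j. j \<noteq> z \<Longrightarrow> x j = 0) \<Longrightarrow> Qf r c x = 0" by (rule Qf_single)
  have O: "c (i,r) * a 0 i * a 0 l + c (i,r+1) * a 1 i * a 1 l + c (r,r+1) * (a 0 i * a 0 l * (a 1 i)^2 + (a 0 i)^2 * a 1 i * a 1 l) = 0"
    if "i < r" "l < r" "i \<noteq> l" for i l
    by (rule stepO[where Q="Qf r c" and A="a 0" and B="a 1" and al="\<lambda>j. c (j,r)" and be="\<lambda>j. c (j,r+1)"
      and g="c (r,r+1)"], rule rel, simp add: Qf_def, insert that, auto)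
  have D: "c (i,r) * (a 0 i)^2 + c (i,r+1) * (a 1 i)^2 + c (r,r+1) * (a 0 i)^2 * (a 1 i)^2 = 0" if "i < r" for i
  proof -
    define l where "l = (if i = 0 then 1 else 0::nat)"
    have l: "l < r" "i \<noteq> l" using r3 by (auto simp: l_def)
    show ?thesis
      by (rule stepD[where Q="Qf r c" and A="a 0" and B="a 1" and al="\<lambda>j. c (j,r)" and be="\<lambda>j. c (j,r+1)"
      and g="c (r,r+1)" and i=i and l=l], rule rel, rule Qf_single, assumption, insert that \<open>l < r\<close> \<open>i \<noteq> l\<close>, auto)
  qed
  have SF: "c (r,r+1) * a 0 i * a 0 j * a 1 k * a 1 l = 0"
    if "i < r" "j < r" "k < r" "l < r" "distinct [i,j,k,l]" "a 0 k = 0" "a 0 l = 0" "a 1 i = 0" "a 1 j = 0" for i j k l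
    by (rule stepSF[where Q="Qf r c" and A="a 0" and B="a 1" and al="\<lambda>j. c (j,r)" and be="\<lambda>j. c (j,r+1)"
      and g="c (r,r+1)"], rule rel, simp add: Qf_def, insert that, auto)
  have g0: "c (r,r+1) = 0"
    by (rule gamma_zero[where A="a 0" and B="a 1" and al="\<lambda>j. c (j,r)" and be="\<lambda>j. c (j,r+1)", OF D O SF H])
  have rel0: "Qf r c x + (\<Sum>j<r. a 0 j * x j)^2 * (\<Sum>j<r. c (j,r) * (x j)^2)
   + (\<Sum>j<r. a 1 j * x j)^2 * (\<Sum>j<r. c (j,r+1) * (x j)^2) = 0" for x
    using rel[of x] g0 by simp
  have O0: "c (i,r) * a 0 i * a 0 l + c (i,r+1) * a 1 i * a 1 l = 0" if "i < r" "l < r" "i \<noteq> l" for i l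
    using O[OF that] g0 by simp
  have N: "c (m,r) * a 0 k * a 0 l + c (m,r+1) * a 1 k * a 1 l = 0"
    if "m < r" "k < r" "l < r" "distinct [m,k,l]" for m k l
    by (rule stepN[where Q="Qf r c" and A="a 0" and B="a 1" and al="\<lambda>j. c (j,r)" and be="\<lambda>j. c (j,r+1)"],
      rule rel0, simp add: Qf_def, insert that, auto)
  have ab: "c (m,r) = 0 \<and> c (m,r+1) = 0" if "m < r" for m
    by (rule ab_zero[where A="a 0" and B="a 1" and al="\<lambda>j. c (j,r)" and be="\<lambda>j. c (j,r+1)", OF O0 N H that])
  have Q0: "Qf r c x = 0" for x
    using rel0[of x] ab by simp
  have cQ: "c (i,k) = 0" if "i < k" "k < r" for i k
    using Q0[of "pt2 i k 1 1"] Qf_pt2[OF that, of c] by simp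
  show "\<forall>p\<in>S2idx r. c p = 0"
  proof
    fix p assume "p \<in> S2idx r"
    then obtain i k where p: "p = (i,k)" "i < k" "k < r + 2" unfolding S2idx_def by auto
    show "c p = 0"
    proof (cases "k < r")
      case True then show ?thesis using cQ p by simp
    next
      case False
      then have "k = r \<or> k = r + 1" using p by auto
      then show ?thesis
      proof
        assume "k = r" then show ?thesis using ab p by simp
      next
        assume k: "k = r + 1"
        show ?thesis
        proof (cases "i = r")
          case True then show ?thesis using g0 p k by simp
        next
          case False then have "i < r" using p k by simp
          then show ?thesis using ab p k by simp
        qed
      qed
    qed
  qed
qed

lemma case1_rel:
  fixes c :: "nat \<Rightarrow> complex" and k :: nat
  assumes k: "k < r + 2" and ck: "c k = 0"
    and R: "(\<Sum>i\<in>{0..<r+2}. pconst (c i) * S1fam r a i) = 0"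
  defines "d \<equiv> (\<lambda>p. if fst p = k then c (snd p) else if snd p = k then c (fst p) else 0)"
  shows "(\<Sum>p\<in>S2idx r. pconst (d p) * S2fam r a p) = 0"
proof -
  define N where "N = r + 2"
  define S where "S = S1fam r a"
  define X where "X i = pconst (c i) * S i" for i
  have kN: "k < N" using k by (simp add: N_def)
  have tm: "pconst (d (i,j)) * S2fam r a (i,j) = (if i = k then S k * X j else 0) + (if j = k then S k * X i else 0)"
    if "i < j" for i j
    using that by (auto simp: d_def S2fam_def X_def S_def algebra_simps)
  have inner: "(\<Sum>i<j. (if i = k then S k * X j else 0) + (if j = k then S k * X i else 0))
     = (if k < j then S k * X j else 0) + (if j = k then (\<Sum>i<k. S k * X i) else 0)" for j
    by (cases "j = k") (simp_all add: sum.distrib)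
  have "(\<Sum>p\<in>S2idx r. pconst (d p) * S2fam r a p) = (\<Sum>j<N. \<Sum>i<j. pconst (d (i,j)) * S2fam r a (i,j))"
    unfolding N_def by (rule sum_S2idx)
  also have "\<dots> = (\<Sum>j<N. \<Sum>i<j. (if i = k then S k * X j else 0) + (if j = k then S k * X i else 0))"
    by (intro sum.cong refl) (simp add: tm)
  also have "\<dots> = (\<Sum>j<N. (if k < j then S k * X j else 0) + (if j = k then (\<Sum>i<k. S k * X i) else 0))"
    by (simp only: inner)
  also have "\<dots> = (\<Sum>j<N. if k < j then S k * X j else 0) + (\<Sum>i<k. S k * X i)"
    using kN by (simp add: sum.distrib)
  also have "(\<Sum>j<N. if k < j then S k * X j else 0) = S k * (\<Sum>j<N. if k < j then X j else 0)"
    by (simp add: sum_distrib_left) (intro sum.cong refl, auto)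
  also have "(\<Sum>i<k. S k * X i) = S k * (\<Sum>i<k. X i)"
    by (simp add: sum_distrib_left)
  also have "S k * (\<Sum>j<N. if k < j then X j else 0) + S k * (\<Sum>i<k. X i) = S k * ((\<Sum>j<N. if k < j then X j else 0) + (\<Sum>i<k. X i))"
    by (simp add: distrib_left)
  also have "(\<Sum>j<N. if k < j then X j else 0) + (\<Sum>i<k. X i) = (\<Sum>j<N. X j)"
  proof -
    have "(\<Sum>j<N. X j) = (\<Sum>j<N. (if j < k then X j else 0) + (if j = k then X j else 0) + (if k < j then X j else 0))"
      by (intro sum.cong refl) auto
    also have "\<dots> = (\<Sum>j<N. if j < k then X j else 0) + X k + (\<Sum>j<N. if k < j then X j else 0)"
      using kN by (simp add: sum.distrib)
    also have "(\<Sum>j<N. if j < k then X j else 0) = (\<Sum>j<k. X j)"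
    proof -
      have "(\<Sum>j<N. if j < k then X j else 0) = (\<Sum>j\<in>{..<N} \<inter> {j. j < k}. X j)"
        by (simp add: sum.inter_restrict)
      also have "{..<N} \<inter> {j. j < k} = {..<k}" using kN by auto
      finally show ?thesis by simp
    qed
    also have "X k = 0" by (simp add: X_def ck)
    finally show ?thesis by (simp add: add.commute)
  qed
  also have "(\<Sum>j<N. X j) = 0" using R by (simp add: X_def S_def atLeast0LessThan N_def)
  finally show ?thesis by simp
qed

lemma three_orth:
  fixes p q a0 a1 a2 b0 b1 b2 :: complex
  assumes o01: "p * a0 * a1 + q * b0 * b1 = 0" and o02: "p * a0 * a2 + q * b0 * b2 = 0"
    and o12: "p * a1 * a2 + q * b1 * b2 = 0"
    and n0: "p * a0^2 + q * b0^2 \<noteq> 0" and n1: "p * a1^2 + q * b1^2 \<noteq> 0" and n2: "p * a2^2 + q * b2^2 \<noteq> 0"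
  shows False
proof -
  define d where "d = a1 * b2 - a2 * b1"
  have e1: "p * a0 * d = 0"
  proof -
    have "p * a0 * d = b2 * (p * a0 * a1 + q * b0 * b1) - b1 * (p * a0 * a2 + q * b0 * b2)"
      by (simp add: d_def algebra_simps)
    also have "\<dots> = 0" using o01 o02 by simp
    finally show ?thesis .
  qed
  have e2: "q * b0 * d = 0"
  proof -
    have "q * b0 * d = - a2 * (p * a0 * a1 + q * b0 * b1) + a1 * (p * a0 * a2 + q * b0 * b2)"
      by (simp add: d_def algebra_simps)
    also have "\<dots> = 0" using o01 o02 by simp
    finally show ?thesis .
  qed
  have "(p * a0^2 + q * b0^2) * d = a0 * (p * a0 * d) + b0 * (q * b0 * d)"
    by (simp add: algebra_simps power2_eq_square)
  also have "\<dots> = 0" by (simp only: e1 e2 mult_zero_right add_0)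
  finally have "d = 0" using n0 by simp
  have "(p * a1 * a2 + q * b1 * b2)^2 - (p * a1^2 + q * b1^2) * (p * a2^2 + q * b2^2) = - p * q * d^2"
    by (simp add: d_def algebra_simps power2_eq_square)
  then have "(p * a1^2 + q * b1^2) * (p * a2^2 + q * b2^2) = 0" using o12 \<open>d = 0\<close> by simp
  then show False using n1 n2 by simp
qed

lemma S1_eval:
  assumes R: "(\<Sum>i\<in>{0..<r+2}. pconst (c i) * S1fam r a i) = 0"
  shows "(\<Sum>j<r. c j * (x j)^2) + c r * (\<Sum>j<r. a 0 j * x j)^2 + c (r+1) * (\<Sum>j<r. a 1 j * x j)^2 = 0"
proof -
  have "(\<Sum>k\<in>{0..<r+2}. c k * sv r a k x) = 0" using arg_cong[OF R, of "ev x"] by (simp only: ev_S1rel ev_zero)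
  moreover have "(\<Sum>k\<in>{0..<r+2}. c k * sv r a k x) = (\<Sum>k<r. c k * sv r a k x) + c r * sv r a r x + c (r+1) * sv r a (r+1) x"
    by (simp add: atLeast0LessThan)
  moreover have "(\<Sum>k<r. c k * sv r a k x) = (\<Sum>j<r. c j * (x j)^2)"
    by (intro sum.cong refl) (simp add: sv_def)
  ultimately show ?thesis by (simp add: sv_def Fv_def)
qed

lemma case2_big:
  assumes r3: "r \<ge> 3" and R: "(\<Sum>i\<in>{0..<r+2}. pconst (c i) * S1fam r a i) = 0"
    and nz: "\<And>k. k < r + 2 \<Longrightarrow> c k \<noteq> 0"
  shows False
proof -
  note E = S1_eval[OF R]
  have N: "c r * (a 0 j)^2 + c (r+1) * (a 1 j)^2 \<noteq> 0" if "j < r" "k < r" "j \<noteq> k" for j k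
  proof -
    have "c j + c r * (a 0 j)^2 + c (r+1) * (a 1 j)^2 = 0"
      using E[of "pt2 j k 1 0"] that by (simp add: lin_pt2 sq_pt2)
    moreover have "c j \<noteq> 0" using nz that by simp
    ultimately show ?thesis by (metis add.assoc add_cancel_right_right)
  qed
  have O: "c r * a 0 j * a 0 k + c (r+1) * a 1 j * a 1 k = 0" if "j < r" "k < r" "j \<noteq> k" for j k
  proof -
    have e1: "c j + c k + c r * (a 0 j + a 0 k)^2 + c (r+1) * (a 1 j + a 1 k)^2 = 0"
      using E[of "pt2 j k 1 1"] that by (simp add: lin_pt2 sq_pt2)
    have e2: "c j + c k + c r * (a 0 j - a 0 k)^2 + c (r+1) * (a 1 j - a 1 k)^2 = 0"
      using E[of "pt2 j k 1 (-1)"] that by (simp add: lin_pt2 sq_pt2)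
    have "4 * (c r * a 0 j * a 0 k + c (r+1) * a 1 j * a 1 k) =
      (c j + c k + c r * (a 0 j + a 0 k)^2 + c (r+1) * (a 1 j + a 1 k)^2) - (c j + c k + c r * (a 0 j - a 0 k)^2 + c (r+1) * (a 1 j - a 1 k)^2)"
      by (simp add: algebra_simps power2_eq_square)
    also have "\<dots> = 0" using e1 e2 by simp
    finally have "4 * (c r * a 0 j * a 0 k + c (r+1) * a 1 j * a 1 k) = 0" .
    then show ?thesis by (subst (asm) mult_eq_0_iff) simp
  qed
  show False
    by (rule three_orth[OF O[of 0 1] O[of 0 2] O[of 1 2] N[of 0 1] N[of 1 0] N[of 2 0]]) (use r3 in auto)
qed

lemma r2_identity:
  fixes X Y u0 u1 v0 v1 c0 c1 c2 c3 :: "'a::comm_ring_1"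
  assumes R: "c0 * X^2 + c1 * Y^2 + c2 * (u0*X + u1*Y)^2 + c3 * (v0*X + v1*Y)^2 = 0"
  shows "(c0*c1*(u0^2*v1^2 + u1^2*v0^2 - 4*u0*u1*v0*v1) - c1^2*u0^2*v0^2 - c0^2*u1^2*v1^2) * (X^2*Y^2)
    + (- c0*c1*v0^2 - c1*u0^2*v0^2*c2) * (X^2*(u0*X + u1*Y)^2)
    + (- c0*c1*u0^2 - c1*u0^2*v0^2*c3) * (X^2*(v0*X + v1*Y)^2)
    + (- c0*c1*v1^2 - c0*u1^2*v1^2*c2) * (Y^2*(u0*X + u1*Y)^2)
    + (- c0*c1*u1^2 - c0*u1^2*v1^2*c3) * (Y^2*(v0*X + v1*Y)^2)
    + (c0*c1) * ((u0*X + u1*Y)^2*(v0*X + v1*Y)^2) = 0"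
proof -
  have "(c0*c1*(u0^2*v1^2 + u1^2*v0^2 - 4*u0*u1*v0*v1) - c1^2*u0^2*v0^2 - c0^2*u1^2*v1^2) * (X^2*Y^2)
    + (- c0*c1*v0^2 - c1*u0^2*v0^2*c2) * (X^2*(u0*X + u1*Y)^2)
    + (- c0*c1*u0^2 - c1*u0^2*v0^2*c3) * (X^2*(v0*X + v1*Y)^2)
    + (- c0*c1*v1^2 - c0*u1^2*v1^2*c2) * (Y^2*(u0*X + u1*Y)^2)
    + (- c0*c1*u1^2 - c0*u1^2*v1^2*c3) * (Y^2*(v0*X + v1*Y)^2)
    + (c0*c1) * ((u0*X + u1*Y)^2*(v0*X + v1*Y)^2)
    = - (c1*u0^2*v0^2*X^2 + c0*u1^2*v1^2*Y^2) * (c0 * X^2 + c1 * Y^2 + c2 * (u0*X + u1*Y)^2 + c3 * (v0*X + v1*Y)^2)"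
    by (simp add: algebra_simps power2_eq_square)
  then show ?thesis using R by simp
qed

lemma pconst_diff: "pconst (a - b) = pconst a - pconst b"
  by (simp add: pconst_def single_diff)
lemma pconst_numeral: "pconst (numeral n) = numeral n"
  by (simp add: pconst_def)
lemma pconst_power: "pconst (a ^ n) = pconst a ^ n"
  by (induction n) (simp_all add: pconst_mult)

lemma linform2: "linform 2 a i = pconst (a i 0) * pvar 0 + pconst (a i 1) * pvar 1"
  by (simp add: linform_def eval_nat_numeral)

lemma case2_small:
  fixes c :: "nat \<Rightarrow> complex"
  assumes R: "(\<Sum>i\<in>{0..<2+2}. pconst (c i) * S1fam 2 a i) = 0"
    and c0: "c 0 \<noteq> 0" and c1: "c 1 \<noteq> 0"
  shows "\<not> lin_indep_family (S2idx 2) (S2fam 2 a)"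
proof -
  define u0 where "u0 = a 0 0" define u1 where "u1 = a 0 1"
  define v0 where "v0 = a 1 0" define v1 where "v1 = a 1 1"
  define X where "X = pvar 0" define Y where "Y = pvar 1"
  define C0 where "C0 = c 0" define C1 where "C1 = c 1" define C2 where "C2 = c 2" define C3 where "C3 = c 3"
  have lf0: "linform 2 a 0 = pconst u0 * X + pconst u1 * Y" by (simp add: linform2 u0_def u1_def X_def Y_def)
  have lf1: "linform 2 a 1 = pconst v0 * X + pconst v1 * Y" by (simp add: linform2 v0_def v1_def X_def Y_def)
  have lf1': "linform 2 a (Suc 0) = pconst v0 * X + pconst v1 * Y" using lf1 by simp
  have S: "S1fam 2 a 0 = X^2" "S1fam 2 a 1 = Y^2" "S1fam 2 a 2 = (pconst u0 * X + pconst u1 * Y)^2"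
     "S1fam 2 a 3 = (pconst v0 * X + pconst v1 * Y)^2"
    by (simp_all add: S1fam_def lf0 lf1' X_def Y_def)
  have S1': "S1fam 2 a (Suc 0) = Y^2" using S(2) by simp
  have sets: "{0..<4} = {0,1,2,3::nat}" "{..<4} = {0,1,2,3::nat}" "{..<1} = {0::nat}" "{..<2} = {0,1::nat}"
    "{..<3} = {0,1,2::nat}" by auto
  have R': "pconst C0 * X^2 + pconst C1 * Y^2 + pconst C2 * (pconst u0 * X + pconst u1 * Y)^2
      + pconst C3 * (pconst v0 * X + pconst v1 * Y)^2 = 0"
    using R by (simp add: add.assoc sets S S1' C0_def C1_def C2_def C3_def)
  note I = r2_identity[OF R']
  define D01 where "D01 = C0*C1*(u0^2*v1^2 + u1^2*v0^2 - 4*u0*u1*v0*v1) - C1^2*u0^2*v0^2 - C0^2*u1^2*v1^2"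
  define D02 where "D02 = - C0*C1*v0^2 - C1*u0^2*v0^2*C2"
  define D03 where "D03 = - C0*C1*u0^2 - C1*u0^2*v0^2*C3"
  define D12 where "D12 = - C0*C1*v1^2 - C0*u1^2*v1^2*C2"
  define D13 where "D13 = - C0*C1*u1^2 - C0*u1^2*v1^2*C3"
  define d where "d p = (if p = (0,1) then D01 else if p = (0,2) then D02 else if p = (0,3) then D03
     else if p = (1,2) then D12 else if p = (1,3) then D13 else if p = (2,3) then C0 * C1 else 0)" for p :: "nat \<times> nat"
  have "(\<Sum>p\<in>S2idx 2. pconst (d p) * S2fam 2 a p) =
      pconst D01 * (X^2 * Y^2) + pconst D02 * (X^2 * (pconst u0 * X + pconst u1 * Y)^2)
    + pconst D03 * (X^2 * (pconst v0 * X + pconst v1 * Y)^2) + pconst D12 * (Y^2 * (pconst u0 * X + pconst u1 * Y)^2)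
    + pconst D13 * (Y^2 * (pconst v0 * X + pconst v1 * Y)^2) + pconst (C0 * C1) * ((pconst u0 * X + pconst u1 * Y)^2 * (pconst v0 * X + pconst v1 * Y)^2)"
    by (simp add: sum_S2idx sets d_def S2fam_def S S1' algebra_simps)
  also have "\<dots> = 0"
    using I by (simp add: D01_def D02_def D03_def D12_def D13_def pconst_mult pconst_add pconst_diff pconst_minus
       pconst_numeral pconst_power)
  finally have z: "(\<Sum>p\<in>S2idx 2. pconst (d p) * S2fam 2 a p) = 0" .
  have "(2::nat, 3::nat) \<in> S2idx 2" by (simp add: S2idx_def)
  moreover have "d (2,3) \<noteq> 0" using c0 c1 by (simp add: d_def C0_def C1_def)
  ultimately show ?thesis using z unfolding lin_indep_family_def by blast
qed

lemma dir_fwd: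
  assumes r2: "r \<ge> 2" and ind: "lin_indep_family (S2idx r) (S2fam r a)"
  shows "lin_indep_family {0..<r+2} (S1fam r a)"
proof (rule ccontr)
  assume "\<not> lin_indep_family {0..<r+2} (S1fam r a)"
  then obtain c k0 where R: "(\<Sum>i\<in>{0..<r+2}. pconst (c i) * S1fam r a i) = 0"
    and k0: "k0 < r + 2" "c k0 \<noteq> 0"
    unfolding lin_indep_family_def by auto
  show False
  proof (cases "\<exists>k<r+2. k \<noteq> k0 \<and> c k = 0")
    case True
    then obtain k where k: "k < r + 2" "k \<noteq> k0" "c k = 0" by auto
    define d where "d = (\<lambda>p::nat\<times>nat. if fst p = k then c (snd p) else if snd p = k then c (fst p) else 0)"
    have "(\<Sum>p\<in>S2idx r. pconst (d p) * S2fam r a p) = 0"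
      unfolding d_def by (rule case1_rel[OF k(1) k(3) R])
    then have dz: "\<forall>p\<in>S2idx r. d p = 0" using ind unfolding lin_indep_family_def by blast
    have "(min k0 k, max k0 k) \<in> S2idx r" using k k0 by (auto simp: S2idx_def)
    moreover have "d (min k0 k, max k0 k) = c k0" using k by (auto simp: d_def min_def max_def)
    ultimately show False using dz k0 by auto
  next
    case False
    then have nz: "\<And>k. k < r + 2 \<Longrightarrow> c k \<noteq> 0" using k0 by auto
    show False
    proof (cases "r \<ge> 3")
      case True then show False using case2_big[OF True R nz] by blast
    next
      case False
      then have r: "r = 2" using r2 by simp
      have "\<not> lin_indep_family (S2idx 2) (S2fam 2 a)"
        by (rule case2_small) (use R nz r in auto)
      then show False using ind r by simp
    qed
  qed
qed

theorem theorem1p2: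
  fixes r :: nat and a :: "nat \<Rightarrow> nat \<Rightarrow> complex"
  assumes "r \<ge> 2"
  shows "lin_indep_family (S2idx r) (S2fam r a) \<longleftrightarrow> lin_indep_family {0..<r+2} (S1fam r a)"
  using dir_fwd[OF assms] dir_back[OF assms] by blast

end
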